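(* Let $\Lambda=(\mathcal{L}\subset\mathbb{R}^s,\mathbb{R}^n)$ be a generic cut-and-project scheme with associated matrix $L$ and with self-similarity $A\in\mathbb{R}^{n\times n}$, and let $B\in\mathbb{R}^{(s-n)\times(s-n)}$, $C\in\mathbb{Z}^{s\times s}$ satisfy $\begin{pmatrix}A&O\\O&B\end{pmatrix}L=LC$. Then $\mu_{A,\mathbb{Q}}=\mu_{B,\mathbb{Q}}=\mu_{C,\mathbb{Q}}=\mu_C$. In particular, either $A,B,C$ are all non-singular or all singular. Moreover, $A,B,C$ are either all diagonalizable over $\mathbb{C}$ or all non-diagonalizable over $\mathbb{C}$.
   Context: For a square matrix $T$, $\mu_T$ is its minimal polynomial (monic polynomial in $\mathbb{C}[X]$ of smallest degree with $\mu_T(T)=O$), and, when the eigenvalues of $T$ are algebraic, $\mu_{T,\mathbb{Q}}$ is the monic polynomial in $\mathbb{Q}[X]$ of smallest degree with $\mu_{T,\mathbb{Q}}(T)=O$. A lattice $\mathcal{L}\subset\mathbb{R}^s$ is $\{L\mathbf{r}:\mathbf{r}\in\mathbb{Z}^s\}$ for a non-singular $L\in\mathbb{R}^{s\times s}$. For $1\le n<s$, the scheme $(\mathcal{L}\subset\mathbb{R}^s,\mathbb{R}^n)$ has projections $\pi_\parallel(\mathbf{x})=(x_1,\dots,x_n)^\top$, $\pi_\perp(\mathbf{x})=(x_{n+1},\dots,x_s)^\top$; it is generic if $\pi_\parallel|_{\mathcal{L}}$ and $\pi_\perp|_{\mathcal{L}}$ are injective and $\pi_\perp(\mathcal{L})$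 is dense in $\mathbb{R}^{s-n}$. $A$ is a self-similarity of it if $A\pi_\parallel(\mathcal{L})\subset\pi_\parallel(\mathcal{L})$ and there exist $C\in\mathbb{Z}^{s\times s}$, $B$ real with $\begin{pmatrix}A&O\\O&B\end{pmatrix}L=LC$. *)

theory Defs
  imports "Jordan_Normal_Form.Matrix" "Jordan_Normal_Form.Char_Poly"
    "HOL-Computational_Algebra.Polynomial" Complex_Main
begin

definition mat_poly_eval :: "'a :: comm_ring_1 poly \<Rightarrow> 'a mat \<Rightarrow> 'a mat" where
  "mat_poly_eval p T =
     foldr (\<lambda>c M. c \<cdot>\<^sub>m 1\<^sub>m (dim_row T) + T * M) (coeffs p) (0\<^sub>m (dim_row T) (dim_row T))"

definition is_min_poly :: "'a :: field mat \<Rightarrow> 'a poly \<Rightarrow> bool" where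
  "is_min_poly T p \<longleftrightarrow>
     lead_coeff p = 1 \<and> mat_poly_eval p T = 0\<^sub>m (dim_row T) (dim_row T) \<and>
     (\<forall>q. lead_coeff q = 1 \<and> mat_poly_eval q T = 0\<^sub>m (dim_row T) (dim_row T)
            \<longrightarrow> degree p \<le> degree q)"

definition is_min_poly_Q :: "'a :: field_char_0 mat \<Rightarrow> rat poly \<Rightarrow> bool" where
  "is_min_poly_Q T p \<longleftrightarrow>
     lead_coeff p = 1 \<and> mat_poly_eval (map_poly of_rat p) T = 0\<^sub>m (dim_row T) (dim_row T) \<and>
     (\<forall>q :: rat poly. lead_coeff q = 1 \<and>
            mat_poly_eval (map_poly of_rat q) T = 0\<^sub>m (dim_row T) (dim_row T)
            \<longrightarrow> degree p \<le> degree q)"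

definition diagonalizable_C :: "real mat \<Rightarrow> bool" where
  "diagonalizable_C T \<longleftrightarrow> (\<exists>D. diagonal_mat D \<and> similar_mat (map_mat complex_of_real T) D)"

definition lattice :: "nat \<Rightarrow> real mat \<Rightarrow> real vec set" where
  "lattice s L = {L *\<^sub>v map_vec real_of_int z | z. z \<in> carrier_vec s}"

definition proj_par :: "nat \<Rightarrow> real vec \<Rightarrow> real vec" where
  "proj_par n x = vec n (\<lambda>i. x $ i)"

definition proj_perp :: "nat \<Rightarrow> nat \<Rightarrow> real vec \<Rightarrow> real vec" where
  "proj_perp n s x = vec (s - n) (\<lambda>i. x $ (n + i))"

text \<open>Generic cut-and-project scheme (L in R^s, R^n) with matrix L.
  Density of pi_perp(L) in R^(s-n) is written out with the (equivalent) sup-norm.\<close>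
definition generic_cps :: "nat \<Rightarrow> nat \<Rightarrow> real mat \<Rightarrow> bool" where
  "generic_cps n s L \<longleftrightarrow>
     1 \<le> n \<and> n < s \<and> L \<in> carrier_mat s s \<and> invertible_mat L \<and>
     inj_on (proj_par n) (lattice s L) \<and>
     inj_on (proj_perp n s) (lattice s L) \<and>
     (\<forall>y \<in> carrier_vec (s - n). \<forall>\<epsilon> > 0. \<exists>x \<in> lattice s L.
        \<forall>i < s - n. \<bar>proj_perp n s x $ i - y $ i\<bar> < \<epsilon>)"

definition self_similarity :: "nat \<Rightarrow> nat \<Rightarrow> real mat \<Rightarrow> real mat \<Rightarrow> bool" where
  "self_similarity n s L A \<longleftrightarrow>
     A \<in> carrier_mat n n \<and>
     (\<forall>x \<in> lattice s L. A *\<^sub>v proj_par n x \<in> proj_par n ` lattice s L) \<and>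
     (\<exists>(C :: int mat) (B :: real mat). C \<in> carrier_mat s s \<and> B \<in> carrier_mat (s - n) (s - n) \<and>
        four_block_mat A (0\<^sub>m n (s - n)) (0\<^sub>m (s - n) n) B * L = L * map_mat real_of_int C)"

end

theory Submission
  imports Defs "Jordan_Normal_Form.Jordan_Normal_Form_Existence"
    "HOL-Computational_Algebra.Polynomial_Factorial" "HOL-Computational_Algebra.Field_as_Ring"
begin

lemma mpe_carrier: "T \<in> carrier_mat m m \<Longrightarrow> mat_poly_eval p T \<in> carrier_mat m m"
proof -
  assume T: "T \<in> carrier_mat m m"
  have "\<And>xs. foldr (\<lambda>c M. c \<cdot>\<^sub>m 1\<^sub>m m + T * M) xs (0\<^sub>m m m) \<in> carrier_mat m m"
  proof -
    fix xs show "foldr (\<lambda>c M. c \<cdot>\<^sub>m 1\<^sub>m m + T * M) xs (0\<^sub>m m m) \<in> carrier_mat m m"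
      by (induct xs, insert T, auto)
  qed
  thus ?thesis unfolding mat_poly_eval_def using T by auto
qed

lemma mpe_0[simp]: "mat_poly_eval 0 T = 0\<^sub>m (dim_row T) (dim_row T)"
  unfolding mat_poly_eval_def by simp

lemma mpe_pCons: assumes T: "T \<in> carrier_mat m m"
  shows "mat_poly_eval (pCons a p) T = a \<cdot>\<^sub>m 1\<^sub>m m + T * mat_poly_eval p T"
proof (cases "p = 0 \<and> a = 0")
  case True
  then show ?thesis using T by auto
next
  case False
  hence "coeffs (pCons a p) = a # coeffs p" by (auto simp: cCons_def)
  then show ?thesis using T unfolding mat_poly_eval_def by auto
qed

lemma smult_zero_left_mat[simp]: "(0::'a::semiring_0) \<cdot>\<^sub>m A = 0\<^sub>m (dim_row A) (dim_col A)"
  by (rule eq_matI) auto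

lemma smult_one_left_mat[simp]: "(1::'a::semiring_1) \<cdot>\<^sub>m A = A"
  by (rule eq_matI) auto

lemma mpe_pCons0: assumes T: "T \<in> carrier_mat m m"
  shows "mat_poly_eval (pCons 0 p) T = T * mat_poly_eval p T"
  using mpe_pCons[OF T, of 0 p] T mpe_carrier[OF T, of p] by simp

lemma mpe_const: assumes T: "T \<in> carrier_mat m m"
  shows "mat_poly_eval [:a:] T = a \<cdot>\<^sub>m 1\<^sub>m m"
  using mpe_pCons[OF T, of a 0] T by auto

lemma add4_mat: "W \<in> carrier_mat nr nc \<Longrightarrow> X \<in> carrier_mat nr nc \<Longrightarrow> Y \<in> carrier_mat nr nc \<Longrightarrow> Z \<in> carrier_mat nr nc
  \<Longrightarrow> (W + X) + (Y + Z) = (W + Y) + (X + (Z :: 'a :: comm_monoid_add mat))"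
  by (rule eq_matI, auto simp: ac_simps)

lemma mpe_add: assumes T: "T \<in> carrier_mat m m"
  shows "mat_poly_eval (p + q) T = mat_poly_eval p T + mat_poly_eval q T"
proof (induct p q rule: poly_induct2)
  case 0
  then show ?case using T by auto
next
  case (pCons a p b q)
  have e: "pCons a p + pCons b q = pCons (a+b) (p + q)" by simp
  show ?case unfolding e mpe_pCons[OF T] pCons
    using T mpe_carrier[OF T]
    by (simp add: add_smult_distrib_right_mat[of _ m m] mult_add_distrib_mat[of _ m m _ m] add4_mat[of _ m m])
qed

lemma mpe_smult: assumes T: "T \<in> carrier_mat m m"
  shows "mat_poly_eval (Polynomial.smult c p) T = c \<cdot>\<^sub>m mat_poly_eval p T"
proof (induct p)
  case 0
  then show ?case using T by auto
next
  case (pCons a p)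
  show ?case
  proof -
    have "c \<cdot>\<^sub>m (a \<cdot>\<^sub>m 1\<^sub>m m) = (c*a) \<cdot>\<^sub>m 1\<^sub>m m" by (rule eq_matI) auto
    thus ?thesis using T mpe_carrier[OF T]
    by (simp add: mpe_pCons[OF T] pCons(2) add_smult_distrib_left_mat[of _ m m] mult_smult_distrib[of _ m m _ m])
  qed
qed

lemma mpe_mult: assumes T: "T \<in> carrier_mat m m"
  shows "mat_poly_eval (p * q) T = mat_poly_eval p T * mat_poly_eval q T"
proof (induct p)
  case 0
  then show ?case using T mpe_carrier[OF T] by (simp add: left_mult_zero_mat[of _ m m])
next
  case (pCons a p)
  have e: "pCons a p * q = Polynomial.smult a q + pCons 0 (p * q)" by simp
  show ?case 
  proof -
    let ?P = "mat_poly_eval p T" let ?Q = "mat_poly_eval q T"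
    have P: "?P \<in> carrier_mat m m" and Q: "?Q \<in> carrier_mat m m" using mpe_carrier[OF T] by auto
    have "(a \<cdot>\<^sub>m 1\<^sub>m m + T * ?P) * ?Q = (a \<cdot>\<^sub>m 1\<^sub>m m) * ?Q + (T * ?P) * ?Q"
      using T P Q by (intro add_mult_distrib_mat[of _ m m], auto)
    also have "(a \<cdot>\<^sub>m 1\<^sub>m m) * ?Q = a \<cdot>\<^sub>m ?Q" using Q by (simp add: mult_smult_assoc_mat[of _ m m _ m])
    also have "(T * ?P) * ?Q = T * (?P * ?Q)" using T P Q by simp
    finally show ?thesis unfolding e mpe_add[OF T] mpe_smult[OF T] mpe_pCons0[OF T] mpe_pCons[OF T] pCons(2)
      using T P Q by simp
  qed
qed

lemma mpe_power: assumes T: "T \<in> carrier_mat m m"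
  shows "mat_poly_eval (p ^ k) T = (mat_poly_eval p T) ^\<^sub>m k"
proof (induct k)
  case 0
  then show ?case using mpe_const[OF T, of 1] T mpe_carrier[OF T, of p] by (simp add: one_pCons)
next
  case (Suc k)
  have P: "mat_poly_eval p T \<in> carrier_mat m m" using mpe_carrier[OF T] .
  show ?case unfolding power_Suc2 mpe_mult[OF T] Suc
    using P by simp
qed

lemma mpe_intertwine: assumes X: "X \<in> carrier_mat m m" and Y: "Y \<in> carrier_mat k k"
  and L: "L \<in> carrier_mat m k" and XL: "X * L = L * Y"
  shows "mat_poly_eval p X * L = L * mat_poly_eval p Y"
proof (induct p)
  case 0
  then show ?case using X Y L by simp
next
  case (pCons a p)
  let ?P = "mat_poly_eval p X" let ?Q = "mat_poly_eval p Y"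
  have P: "?P \<in> carrier_mat m m" and Q: "?Q \<in> carrier_mat k k" using mpe_carrier X Y by auto
  have "(a \<cdot>\<^sub>m 1\<^sub>m m + X * ?P) * L = (a \<cdot>\<^sub>m 1\<^sub>m m) * L + (X * ?P) * L"
    using X P L by (intro add_mult_distrib_mat[of _ m m], auto)
  also have "(a \<cdot>\<^sub>m 1\<^sub>m m) * L = a \<cdot>\<^sub>m L" using L by (simp add: mult_smult_assoc_mat[of _ m m _ k])
  also have "(X * ?P) * L = X * (?P * L)" using X P L by simp
  also have "\<dots> = X * (L * ?Q)" using pCons(2) by simp
  also have "\<dots> = (X * L) * ?Q" using X L Q by simp
  also have "\<dots> = L * (Y * ?Q)" unfolding XL using Y L Q by simp
  also have "a \<cdot>\<^sub>m L = L * (a \<cdot>\<^sub>m 1\<^sub>m k)" using L by (simp add: mult_smult_distrib[of _ m k _ k])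
  also have "L * (a \<cdot>\<^sub>m 1\<^sub>m k) + L * (Y * ?Q) = L * (a \<cdot>\<^sub>m 1\<^sub>m k + Y * ?Q)"
    using L Y Q by (intro mult_add_distrib_mat[symmetric, of _ m k _ k], auto)
  finally show ?case using mpe_pCons X Y by metis
qed

lemma (in comm_ring_hom) mpe_hom: assumes T: "T \<in> carrier_mat m m"
  shows "map_mat hom (mat_poly_eval p T) = mat_poly_eval (map_poly hom p) (map_mat hom T)"
proof (induct p)
  case 0
  then show ?case using T by (auto simp: map_poly_0)
next
  case (pCons a p)
  have T': "map_mat hom T \<in> carrier_mat m m" using T by simp
  have P: "mat_poly_eval p T \<in> carrier_mat m m" using mpe_carrier T by auto
  have "map_mat hom (a \<cdot>\<^sub>m 1\<^sub>m m + T * mat_poly_eval p T) = 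
     hom a \<cdot>\<^sub>m 1\<^sub>m m + map_mat hom T * map_mat hom (mat_poly_eval p T)"
    using T P by (auto simp: mat_hom_mult[of _ m m _ m, symmetric] intro!: eq_matI simp: hom_distribs)
  then show ?case unfolding mpe_pCons[OF T] mpe_pCons[OF T'] pCons(2) Polynomial.map_poly_pCons[where f = hom, OF hom_zero] 
    by simp
qed

lemma mpe_four_block: assumes A: "A \<in> carrier_mat n1 n1" and B: "B \<in> carrier_mat n2 n2"
  shows "mat_poly_eval p (four_block_mat A (0\<^sub>m n1 n2) (0\<^sub>m n2 n1) B) =
     four_block_mat (mat_poly_eval p A) (0\<^sub>m n1 n2) (0\<^sub>m n2 n1) (mat_poly_eval p B)"
proof (induct p)
  case 0
  then show ?case using A B by simp
next
  case (pCons a p)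
  let ?M = "four_block_mat A (0\<^sub>m n1 n2) (0\<^sub>m n2 n1) B"
  have M: "?M \<in> carrier_mat (n1+n2) (n1+n2)" using A B by auto
  let ?P = "mat_poly_eval p A" let ?Q = "mat_poly_eval p B"
  have P: "?P \<in> carrier_mat n1 n1" and Q: "?Q \<in> carrier_mat n2 n2" using mpe_carrier A B by auto
  have "mat_poly_eval (pCons a p) ?M = a \<cdot>\<^sub>m 1\<^sub>m (n1+n2) + ?M * four_block_mat ?P (0\<^sub>m n1 n2) (0\<^sub>m n2 n1) ?Q"
    unfolding mpe_pCons[OF M] pCons ..
  also have "?M * four_block_mat ?P (0\<^sub>m n1 n2) (0\<^sub>m n2 n1) ?Q = 
     four_block_mat (A * ?P) (0\<^sub>m n1 n2) (0\<^sub>m n2 n1) (B * ?Q)"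
    by (subst mult_four_block_mat[of _ n1 n1 _ n2 _ n2 _ _ n1 _ n2], insert A B P Q, auto)
  also have "1\<^sub>m (n1+n2) = four_block_mat (1\<^sub>m n1) (0\<^sub>m n1 n2) (0\<^sub>m n2 n1) (1\<^sub>m n2)" by simp
  also have "a \<cdot>\<^sub>m \<dots> = four_block_mat (a \<cdot>\<^sub>m 1\<^sub>m n1) (0\<^sub>m n1 n2) (0\<^sub>m n2 n1) (a \<cdot>\<^sub>m 1\<^sub>m n2)"
    by (subst smult_four_block_mat[of _ n1 n1 _ n2 _ n2], auto)
  also have "\<dots> + four_block_mat (A * ?P) (0\<^sub>m n1 n2) (0\<^sub>m n2 n1) (B * ?Q) =
     four_block_mat (a \<cdot>\<^sub>m 1\<^sub>m n1 + A * ?P) (0\<^sub>m n1 n2) (0\<^sub>m n2 n1) (a \<cdot>\<^sub>m 1\<^sub>m n2 + B * ?Q)"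
    by (subst add_four_block_mat[of _ n1 n1 _ n2 _ n2], insert A B P Q, auto)
  finally show ?case unfolding mpe_pCons[OF A] mpe_pCons[OF B] .
qed

lemma mpe_upper_triangular: assumes T: "T \<in> carrier_mat m m" and ut: "upper_triangular T"
  shows "upper_triangular (mat_poly_eval p T) \<and> (\<forall>i<m. mat_poly_eval p T $$ (i,i) = poly p (T $$ (i,i)))"
proof (induct p)
  case 0
  then show ?case using T by (simp add: upper_triangular_def)
next
  case (pCons a p)
  let ?P = "mat_poly_eval p T"
  have P: "?P \<in> carrier_mat m m" using mpe_carrier T by auto
  have utP: "\<And>i j. i < m \<Longrightarrow> j < i \<Longrightarrow> ?P $$ (i,j) = 0" using pCons P by (auto simp: upper_triangular_def)
  have utT: "\<And>i j. i < m \<Longrightarrow> j < i \<Longrightarrow> T $$ (i,j) = 0" using ut T by (auto simp: upper_triangular_def)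
  have prod: "(T * ?P) $$ (i,j) = (\<Sum>k<m. T $$ (i,k) * ?P $$ (k,j))" if "i < m" "j < m" for i j
    using that T P by (simp add: scalar_prod_def lessThan_atLeast0)
  have up: "(T * ?P) $$ (i,j) = 0" if "i < m" "j < i" for i j
  proof -
    have "(T * ?P) $$ (i,j) = (\<Sum>k<m. 0)"
      unfolding prod[OF that(1) order.strict_trans[OF that(2) that(1)]]
      by (rule sum.cong, insert that utP utT, auto, metis linorder_not_le mult_not_zero le_less_trans)
    thus ?thesis by simp
  qed
  have dg: "(T * ?P) $$ (i,i) = T $$ (i,i) * ?P $$ (i,i)" if "i < m" for i
  proof -
    have "(T * ?P) $$ (i,i) = (\<Sum>k<m. if k = i then T $$ (i,i) * ?P $$ (i,i) else 0)"
      unfolding prod[OF that that]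
      by (rule sum.cong, insert that utP utT, auto, metis linorder_neqE_nat mult_not_zero)
    thus ?thesis using that by simp
  qed
  show ?case unfolding mpe_pCons[OF T] using T P up dg pCons
    by (auto simp: upper_triangular_def)
qed

lemma mpe_diagonal: assumes T: "T \<in> carrier_mat m m" and dg: "diagonal_mat T"
  shows "diagonal_mat (mat_poly_eval p T) \<and> (\<forall>i<m. mat_poly_eval p T $$ (i,i) = poly p (T $$ (i,i)))"
proof (induct p)
  case 0
  then show ?case using T by (simp add: diagonal_mat_def)
next
  case (pCons a p)
  let ?P = "mat_poly_eval p T"
  have P: "?P \<in> carrier_mat m m" using mpe_carrier T by auto
  have dP: "\<And>i j. i < m \<Longrightarrow> j < m \<Longrightarrow> i \<noteq> j \<Longrightarrow> ?P $$ (i,j) = 0" using pCons P by (auto simp: diagonal_mat_def)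
  have dT: "\<And>i j. i < m \<Longrightarrow> j < m \<Longrightarrow> i \<noteq> j \<Longrightarrow> T $$ (i,j) = 0" using dg T by (auto simp: diagonal_mat_def)
  have prod: "(T * ?P) $$ (i,j) = (\<Sum>k<m. T $$ (i,k) * ?P $$ (k,j))" if "i < m" "j < m" for i j
    using that T P by (simp add: scalar_prod_def lessThan_atLeast0)
  have dd: "(T * ?P) $$ (i,j) = (if i = j then T $$ (i,i) * ?P $$ (i,i) else 0)" if "i < m" "j < m" for i j
  proof -
    have "(T * ?P) $$ (i,j) = (\<Sum>k<m. if k = i then T $$ (i,i) * ?P $$ (i,j) else 0)"
      unfolding prod[OF that]
      by (rule sum.cong, insert that dP dT, auto)
    thus ?thesis using that dP by auto
  qed
  show ?case unfolding mpe_pCons[OF T] using T P dd pCons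
    by (auto simp: diagonal_mat_def)
qed

lemma mpe_similar: assumes "similar_mat_wit X J P Q"
  shows "mat_poly_eval f X = P * mat_poly_eval f J * Q"
proof -
  from similar_mat_witD[OF refl assms] obtain n where
    c: "{X, J, P, Q} \<subseteq> carrier_mat n n" "P * Q = 1\<^sub>m n" "Q * P = 1\<^sub>m n" and XJ: "X = P * J * Q" by blast
  have X: "X \<in> carrier_mat n n" and J: "J \<in> carrier_mat n n" and P: "P \<in> carrier_mat n n" and Q: "Q \<in> carrier_mat n n"
    using c by auto
  have "X * P = P * J" unfolding XJ using J P Q c(3) by (simp add: assoc_mult_mat[of _ n n _ n _ n])
  from mpe_intertwine[OF X J P this, of f]
  have e: "mat_poly_eval f X * P = P * mat_poly_eval f J" .
  have FX: "mat_poly_eval f X \<in> carrier_mat n n" and FJ: "mat_poly_eval f J \<in> carrier_mat n n"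
    using mpe_carrier X J by auto
  have "mat_poly_eval f X = mat_poly_eval f X * (P * Q)" using c(2) FX by simp
  also have "\<dots> = (mat_poly_eval f X * P) * Q" using FX P Q by simp
  finally show ?thesis unfolding e .
qed

lemma mpe_lin_jb: "mat_poly_eval [:-a, 1:] (jordan_block n (a :: 'a :: comm_ring_1)) = jordan_block n 0"
proof -
  have J: "jordan_block n a \<in> carrier_mat n n" by simp
  show ?thesis unfolding mpe_pCons[OF J] mpe_const[OF J]
    by (rule eq_matI, auto)
qed

lemma mpe_jb_zero: "mat_poly_eval ([:-a, 1:]^n) (jordan_block n (a :: 'a :: field)) = 0\<^sub>m n n"
proof -
  have J: "jordan_block n a \<in> carrier_mat n n" by simp
  show ?thesis unfolding mpe_power[OF J] mpe_lin_jb jordan_block_zero_pow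
    by (rule eq_matI, auto)
qed

lemma mpe_jordan_matrix_zero: 
  fixes f :: "'a :: field poly"
  assumes "(\<Prod>(n, a)\<leftarrow>n_as. [:- a, 1:] ^ n) dvd f"
  shows "mat_poly_eval f (jordan_matrix n_as) = 0\<^sub>m (sum_list (map fst n_as)) (sum_list (map fst n_as))"
  using assms
proof (induct n_as arbitrary: f)
  case Nil
  have "jordan_matrix ([] :: (nat \<times> 'a) list) \<in> carrier_mat 0 0" using jordan_matrix_carrier[of "[] :: (nat \<times> 'a) list"] by simp
  from mpe_carrier[OF this, of f] show ?case by (intro eq_matI, auto)
next
  case (Cons na n_as)
  obtain n a where na: "na = (n,a)" by force
  let ?N = "sum_list (map fst n_as)"
  have d1: "[:- a, 1:] ^ n dvd f" and d2: "(\<Prod>(n, a)\<leftarrow>n_as. [:- a, 1:] ^ n) dvd f"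
    using Cons(2) unfolding na by (auto intro: dvd_mult_left dvd_mult_right)
  from d1 obtain g where f: "f = [:- a, 1:] ^ n * g" by (elim dvdE)
  have J: "jordan_block n a \<in> carrier_mat n n" by simp
  have "mat_poly_eval f (jordan_block n a) = 0\<^sub>m n n"
    unfolding f mpe_mult[OF J] mpe_jb_zero using mpe_carrier[OF J, of g] by simp
  moreover have "mat_poly_eval f (jordan_matrix n_as) = 0\<^sub>m ?N ?N" using Cons(1)[OF d2] .
  moreover have JM: "jordan_matrix n_as \<in> carrier_mat ?N ?N" by simp
  ultimately show ?case unfolding na jordan_matrix_Cons mpe_four_block[OF J JM] by simp
qed

lemma complex_cayley_hamilton: assumes X: "(X :: complex mat) \<in> carrier_mat n n"
  shows "mat_poly_eval (char_poly X) X = 0\<^sub>m n n"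
proof -
  from char_poly_factorized[OF X] obtain as where "char_poly X = (\<Prod>a\<leftarrow>as. [:- a, 1:])" by auto
  from jordan_nf_exists[OF X this] obtain n_as where jnf: "jordan_nf X n_as" ..
  from jnf obtain P Q where wit: "similar_mat_wit X (jordan_matrix n_as) P Q"
    unfolding jordan_nf_def similar_mat_def by blast
  note c = similar_mat_witD2(5-7)[OF X wit]
  have N: "sum_list (map fst n_as) = n" using c(1) by (metis carrier_matD(1) jordan_matrix_dim(1))
  have "mat_poly_eval (char_poly X) (jordan_matrix n_as) = 0\<^sub>m n n"
    using mpe_jordan_matrix_zero[of n_as "char_poly X"] jordan_nf_char_poly[OF jnf] 
    unfolding N by simp
  hence "P * mat_poly_eval (char_poly X) (jordan_matrix n_as) * Q = 0\<^sub>m n n"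
    using c by simp
  thus ?thesis unfolding mpe_similar[OF wit] .
qed

lemma jb_double_root: assumes k: "k \<ge> 2" and z: "mat_poly_eval f (jordan_block k (a :: 'a :: field)) = 0\<^sub>m k k"
  shows "[:-a, 1:]^2 dvd f"
proof -
  have J: "jordan_block k a \<in> carrier_mat k k" by simp
  have ut: "upper_triangular (jordan_block k a)" unfolding upper_triangular_def by auto
  note U = mpe_upper_triangular[OF J ut]
  have "poly f a = 0" using U[of f] z k by force
  then obtain g where f: "f = [:-a, 1:] * g" unfolding poly_eq_0_iff_dvd by (elim dvdE)
  let ?G = "mat_poly_eval g (jordan_block k a)"
  have G: "?G \<in> carrier_mat k k" using mpe_carrier[OF J] .
  have "mat_poly_eval f (jordan_block k a) = jordan_block k 0 * ?G"
    unfolding f mpe_mult[OF J] mpe_lin_jb ..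
  hence "(jordan_block k 0 * ?G) $$ (0,1) = 0\<^sub>m k k $$ (0,1)" using z by simp
  hence "(jordan_block k 0 * ?G) $$ (0,1) = 0" using k by simp
  moreover have "(jordan_block k 0 * ?G) $$ (0,1) = (\<Sum>j<k. jordan_block k 0 $$ (0,j) * ?G $$ (j,1))"
    using G k by (simp add: scalar_prod_def lessThan_atLeast0)
  moreover have "\<dots> = (\<Sum>j<k. if j = 1 then ?G $$ (1,1) else 0)"
    by (rule sum.cong, insert k, auto)
  moreover have "\<dots> = ?G $$ (1,1)" using k by simp
  moreover have "?G $$ (1,1) = poly g a" using U[of g] k by auto
  ultimately have "poly g a = 0" by simp
  then obtain h where g: "g = [:-a, 1:] * h" unfolding poly_eq_0_iff_dvd by (elim dvdE)
  show ?thesis unfolding f g power2_eq_square mult.assoc[symmetric] by (rule dvd_triv_left)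
qed

lemma jordan_matrix_small_blocks: 
  fixes f :: "'a :: field poly"
  assumes z: "mat_poly_eval f (jordan_matrix n_as) = 0\<^sub>m (sum_list (map fst n_as)) (sum_list (map fst n_as))"
  and sf: "\<And>a. \<not> [:-a, 1:]^2 dvd f"
  shows "\<forall>(k,a) \<in> set n_as. k \<le> (1 :: nat)"
  using z
proof (induct n_as)
  case Nil
  then show ?case by simp
next
  case (Cons na n_as)
  obtain n a where na: "na = (n,a)" by force
  let ?N = "sum_list (map fst n_as)"
  have J: "jordan_block n (a :: 'a) \<in> carrier_mat n n" by simp
  have JM: "jordan_matrix n_as \<in> carrier_mat ?N ?N" by simp
  have e: "four_block_mat (mat_poly_eval f (jordan_block n a)) (0\<^sub>m n ?N) (0\<^sub>m ?N n) (mat_poly_eval f (jordan_matrix n_as))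
     = 0\<^sub>m (n + ?N) (n + ?N)" using Cons(2) unfolding na jordan_matrix_Cons 
    by (subst mpe_four_block[OF J JM, symmetric], simp)
  have F1: "mat_poly_eval f (jordan_block n a) \<in> carrier_mat n n" using mpe_carrier[OF J] .
  have F2: "mat_poly_eval f (jordan_matrix n_as) \<in> carrier_mat ?N ?N" using mpe_carrier[OF JM] .
  have z1: "mat_poly_eval f (jordan_block n a) = 0\<^sub>m n n"
  proof (rule eq_matI)
    fix i j assume "i < dim_row (0\<^sub>m n n :: 'a mat)" "j < dim_col (0\<^sub>m n n :: 'a mat)"
    hence ij: "i < n" "j < n" by auto
    have "four_block_mat (mat_poly_eval f (jordan_block n a)) (0\<^sub>m n ?N) (0\<^sub>m ?N n) (mat_poly_eval f (jordan_matrix n_as)) $$ (i,j) = 0"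
      unfolding e using ij by simp
    thus "mat_poly_eval f (jordan_block n a) $$ (i,j) = 0\<^sub>m n n $$ (i,j)" using ij F1 F2 by simp
  qed (insert F1, auto)
  have z2: "mat_poly_eval f (jordan_matrix n_as) = 0\<^sub>m ?N ?N"
  proof (rule eq_matI)
    fix i j assume "i < dim_row (0\<^sub>m ?N ?N :: 'a mat)" "j < dim_col (0\<^sub>m ?N ?N :: 'a mat)"
    hence ij: "i < ?N" "j < ?N" by auto
    have "four_block_mat (mat_poly_eval f (jordan_block n a)) (0\<^sub>m n ?N) (0\<^sub>m ?N n) (mat_poly_eval f (jordan_matrix n_as)) $$ (n+i,n+j) = 0"
      unfolding e using ij by simp
    thus "mat_poly_eval f (jordan_matrix n_as) $$ (i,j) = 0\<^sub>m ?N ?N $$ (i,j)" using ij F1 F2 by simp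
  qed (insert F2, auto)
  have "n \<le> 1"
  proof (rule ccontr)
    assume "\<not> n \<le> 1" hence "2 \<le> n" by simp
    from jb_double_root[OF this z1] sf[of a] show False by simp
  qed
  with Cons(1)[OF z2] show ?case unfolding na by auto
qed

lemma jordan_matrix_diagonal: assumes "\<forall>(k,a) \<in> set n_as. k \<le> (1 :: nat)"
  shows "diagonal_mat (jordan_matrix n_as)"
  using assms
proof (induct n_as)
  case Nil
  then show ?case by (simp add: diagonal_mat_def jordan_matrix_def)
next
  case (Cons na n_as)
  obtain n a where na: "na = (n,a)" by force
  have n: "n \<le> 1" and IH: "diagonal_mat (jordan_matrix n_as)" using Cons unfolding na by auto
  show ?case unfolding na jordan_matrix_Cons diagonal_mat_def
  proof (intro allI impI)
    fix i j assume i: "i < dim_row (four_block_mat (jordan_block n a) (0\<^sub>m n (sum_list (map fst n_as))) (0\<^sub>m (sum_list (map fst n_as)) n) (jordan_matrix n_as))"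
      and j: "j < dim_col (four_block_mat (jordan_block n a) (0\<^sub>m n (sum_list (map fst n_as))) (0\<^sub>m (sum_list (map fst n_as)) n) (jordan_matrix n_as))"
      and ij: "i \<noteq> j"
    show "four_block_mat (jordan_block n a) (0\<^sub>m n (sum_list (map fst n_as))) (0\<^sub>m (sum_list (map fst n_as)) n) (jordan_matrix n_as) $$ (i, j) = 0"
    proof (cases "i < n")
      case True
      show ?thesis
      proof (cases "j < n")
        case True
        with \<open>i < n\<close> n ij show ?thesis by simp
      next
        case False
        with \<open>i < n\<close> i j show ?thesis by simp
      qed
    next
      case False
      show ?thesis
      proof (cases "j < n")
        case True
        with \<open>\<not> i < n\<close> i j show ?thesis by simp
      next
        case False
        have "jordan_matrix n_as $$ (i - n, j - n) = 0"
          using IH \<open>\<not> i < n\<close> False i j ij unfolding diagonal_mat_def by simp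
        with \<open>\<not> i < n\<close> False i j show ?thesis by simp
      qed
    qed
  qed
qed



lemma map_poly_of_rat_mult: "map_poly (of_rat :: rat \<Rightarrow> 'a :: field_char_0) (p * q) = map_poly of_rat p * map_poly of_rat q"
proof -
  interpret mp: map_poly_idom_hom "of_rat :: rat \<Rightarrow> 'a" ..
  show ?thesis by (rule mp.hom_mult)
qed

lemma of_real_of_rat_complex: "complex_of_real (of_rat q) = of_rat q"
  by (simp add: of_rat_def split: prod.split)

lemma map_poly_of_real_of_rat: "map_poly complex_of_real (map_poly of_rat p) = map_poly of_rat p"
  by (subst map_poly_map_poly, auto simp: o_def of_real_of_rat_complex)

lemma real_ann_complex: assumes T: "(T :: real mat) \<in> carrier_mat m m"
  shows "mat_poly_eval (map_poly of_rat q) T = 0\<^sub>m m m \<longleftrightarrow>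
    mat_poly_eval (map_poly (of_rat :: rat \<Rightarrow> complex) q) (map_mat complex_of_real T) = 0\<^sub>m m m"
proof -
  have e: "map_mat complex_of_real (mat_poly_eval (map_poly of_rat q) T) = 
    mat_poly_eval (map_poly (of_rat :: rat \<Rightarrow> complex) q) (map_mat complex_of_real T)"
    unfolding of_real_hom.mpe_hom[OF T] map_poly_of_real_of_rat ..
  have z: "map_mat complex_of_real (0\<^sub>m m m) = 0\<^sub>m m m" by (rule eq_matI, auto)
  show ?thesis unfolding e[symmetric]
    by (metis z of_real_hom.mat_hom_inj)
qed

definition sep_poly :: "rat poly \<Rightarrow> bool" where
  "sep_poly p \<longleftrightarrow> (\<exists>u v. u * p + v * pderiv p = 1)"

lemma sep_imp_diag: assumes T: "(T :: real mat) \<in> carrier_mat m m"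
  and ann: "mat_poly_eval (map_poly of_rat p) T = 0\<^sub>m m m"
  and sep: "sep_poly p"
  shows "diagonalizable_C T"
proof -
  let ?Tc = "map_mat complex_of_real T"
  let ?pc = "map_poly (of_rat :: rat \<Rightarrow> complex) p"
  have Tc: "?Tc \<in> carrier_mat m m" using T by simp
  have z: "mat_poly_eval ?pc ?Tc = 0\<^sub>m m m" using real_ann_complex[OF T] ann by simp
  from char_poly_factorized[OF Tc] obtain as where "char_poly ?Tc = (\<Prod>a\<leftarrow>as. [:- a, 1:])" by auto
  from jordan_nf_exists[OF Tc this] obtain n_as where jnf: "jordan_nf ?Tc n_as" ..
  from jnf obtain P Q where wit: "similar_mat_wit ?Tc (jordan_matrix n_as) P Q"
    unfolding jordan_nf_def similar_mat_def by blast
  note c = similar_mat_witD2(5-7)[OF Tc wit]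
  have N: "sum_list (map fst n_as) = m" using c(1) by (metis carrier_matD(1) jordan_matrix_dim(1))
  have wit': "similar_mat_wit (jordan_matrix n_as) ?Tc Q P" by (rule similar_mat_wit_sym[OF wit])
  have zJ: "mat_poly_eval ?pc (jordan_matrix n_as) = 0\<^sub>m m m" 
    unfolding mpe_similar[OF wit'] z using c by simp
  from sep obtain u v where uv: "u * p + v * pderiv p = 1" unfolding sep_poly_def by blast
  have uv': "map_poly of_rat u * ?pc + map_poly of_rat v * pderiv ?pc = 1"
  proof -
    have "map_poly (of_rat :: rat \<Rightarrow> complex) (u * p + v * pderiv p) = 1" unfolding uv by simp
    thus ?thesis by (simp add: map_poly_of_rat_mult of_rat_hom.map_poly_pderiv hom_distribs)
  qed
  have sf: "\<not> [:-a, 1:]^2 dvd ?pc" for a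
  proof
    assume "[:-a, 1:]^2 dvd ?pc"
    then obtain h where "?pc = [:-a,1:]^2 * h" by (elim dvdE)
    hence h: "?pc = [:-a,1:] * ([:-a,1:] * h)" by (simp only: power2_eq_square mult.assoc)
    have d1: "[:-a,1:] dvd ?pc" unfolding h by (rule dvd_triv_left)
    have "pderiv ?pc = [:-a,1:] * (pderiv ([:-a,1:] * h) + h * pderiv [:-a,1:])"
      unfolding h pderiv_mult by (simp add: algebra_simps)
    hence d2: "[:-a,1:] dvd pderiv ?pc" by (metis dvd_triv_left)
    have "[:-a,1:] dvd (1 :: complex poly)" unfolding uv'[symmetric] using d1 d2 by (intro dvd_add dvd_mult)
    hence "degree [:-a,1:] \<le> degree (1 :: complex poly)" by (rule dvd_imp_degree_le) simp
    thus False by simp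
  qed
  have small: "\<forall>(k,a) \<in> set n_as. k \<le> (1 :: nat)"
    by (rule jordan_matrix_small_blocks[of ?pc n_as], unfold N, rule zJ, rule sf)
  have "diagonal_mat (jordan_matrix n_as)" by (rule jordan_matrix_diagonal[OF small])
  moreover have "similar_mat ?Tc (jordan_matrix n_as)" using wit unfolding similar_mat_def by blast
  ultimately show ?thesis unfolding diagonalizable_C_def by blast
qed

lemma diag_imp_sep: assumes T: "(T :: real mat) \<in> carrier_mat m m"
  and minp: "is_min_poly_Q T p"
  and dg: "diagonalizable_C T"
  shows "sep_poly p"
proof (rule ccontr)
  assume nsep: "\<not> sep_poly p"
  have lp: "lead_coeff p = 1" and ann: "mat_poly_eval (map_poly of_rat p) T = 0\<^sub>m m m"
    and minq: "\<And>q. lead_coeff q = 1 \<Longrightarrow> mat_poly_eval (map_poly of_rat q) T = 0\<^sub>m m m \<Longrightarrow> degree p \<le> degree q"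
    using minp T unfolding is_min_poly_Q_def by auto
  have p0: "p \<noteq> 0" using lp by auto
  define g where "g = gcd p (pderiv p)"
  have g0: "g \<noteq> 0" using p0 unfolding g_def by simp
  have nu: "\<not> is_unit g"
  proof
    assume "is_unit g"
    then obtain k where k: "1 = g * k" by (elim dvdE)
    have "fst (bezout_coefficients p (pderiv p)) * p + snd (bezout_coefficients p (pderiv p)) * pderiv p = g"
      unfolding g_def by (rule bezout_coefficients_fst_snd)
    hence "(fst (bezout_coefficients p (pderiv p)) * p + snd (bezout_coefficients p (pderiv p)) * pderiv p) * k = 1"
      using k by simp
    hence "(fst (bezout_coefficients p (pderiv p)) * k) * p + (snd (bezout_coefficients p (pderiv p)) * k) * pderiv p = 1"
      by (simp add: algebra_simps)
    hence "sep_poly p" unfolding sep_poly_def by blast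
    with nsep show False by simp
  qed
  have dgg: "degree g \<noteq> 0" using is_unit_iff_degree[OF g0] nu by simp
  obtain r0 where pr: "p = g * r0" using gcd_dvd1[of p "pderiv p"] unfolding g_def[symmetric] by (elim dvdE)
  have r00: "r0 \<noteq> 0" using p0 pr by auto
  have "degree p = degree g + degree r0" unfolding pr by (rule degree_mult_eq[OF g0 r00])
  hence dr0: "degree r0 < degree p" using dgg by simp
  define r where "r = Polynomial.smult (inverse (lead_coeff r0)) r0"
  have lr: "lead_coeff r = 1" unfolding r_def using r00 by simp
  have dr: "degree r = degree r0" unfolding r_def using r00 by simp
  let ?Tc = "map_mat complex_of_real T"
  let ?pc = "map_poly (of_rat :: rat \<Rightarrow> complex) p"
  let ?rz = "map_poly (of_rat :: rat \<Rightarrow> complex) r0"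
  let ?gc = "map_poly (of_rat :: rat \<Rightarrow> complex) g"
  have Tc: "?Tc \<in> carrier_mat m m" using T by simp
  have z: "mat_poly_eval ?pc ?Tc = 0\<^sub>m m m" using real_ann_complex[OF T] ann by simp
  from dg obtain D where dD: "diagonal_mat D" and sim: "similar_mat ?Tc D" unfolding diagonalizable_C_def by blast
  from sim obtain P Q where wit: "similar_mat_wit ?Tc D P Q" unfolding similar_mat_def by blast
  note c = similar_mat_witD2(5-7)[OF Tc wit]
  have wit': "similar_mat_wit D ?Tc Q P" by (rule similar_mat_wit_sym[OF wit])
  have zD: "mat_poly_eval ?pc D = 0\<^sub>m m m" 
    unfolding mpe_similar[OF wit'] z using c by simp
  have roots: "poly ?pc (D $$ (i,i)) = 0" if "i < m" for i
    using mpe_diagonal[OF c(1) dD, of ?pc] zD that by (metis index_zero_mat(1))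
  have pc0: "?pc \<noteq> 0" using p0 by simp
  have pcm: "?pc = ?gc * ?rz" unfolding pr map_poly_of_rat_mult ..
  have key: "poly ?rz a = 0" if pa: "poly ?pc a = 0" for a
  proof (rule ccontr)
    assume ne: "poly ?rz a \<noteq> 0"
    have o1: "order a ?pc = order a ?gc + order a ?rz" unfolding pcm
      by (rule order_mult, insert pc0 pcm, simp)
    have o2: "order a ?rz = 0" using ne order_root by blast
    have o3: "order a ?pc \<noteq> 0" using pa pc0 order_root by blast
    have "degree ?pc \<noteq> 0" using order_degree[OF pc0, of a] o3 by simp
    hence pd0: "pderiv ?pc \<noteq> 0" by (simp add: pderiv_eq_0_iff)
    obtain k where pk: "pderiv p = g * k" using gcd_dvd2[of p "pderiv p"] unfolding g_def[symmetric] by (elim dvdE)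
    have "pderiv ?pc = map_poly of_rat (pderiv p)" by (simp add: of_rat_hom.map_poly_pderiv)
    also have "\<dots> = ?gc * map_poly of_rat k" unfolding pk map_poly_of_rat_mult ..
    finally have "pderiv ?pc = ?gc * map_poly of_rat k" .
    hence "?gc dvd pderiv ?pc" by simp
    from dvd_imp_order_le[OF pd0 this] have "order a ?gc \<le> order a (pderiv ?pc)" .
    moreover have "order a ?pc = Suc (order a (pderiv ?pc))" by (rule order_pderiv[OF pc0 pa])
    ultimately show False using o1 o2 by simp
  qed
  let ?rc = "map_poly (of_rat :: rat \<Rightarrow> complex) r"
  have rc: "?rc = Polynomial.smult (of_rat (inverse (lead_coeff r0))) ?rz"
    unfolding r_def by (rule of_rat_hom.map_poly_hom_smult)
  have zrD: "mat_poly_eval ?rc D = 0\<^sub>m m m"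
  proof -
    note DD = mpe_diagonal[OF c(1) dD, of ?rc]
    have RD: "mat_poly_eval ?rc D \<in> carrier_mat m m" using mpe_carrier[OF c(1)] .
    show ?thesis
    proof (rule eq_matI)
      fix i j assume "i < dim_row (0\<^sub>m m m :: complex mat)" "j < dim_col (0\<^sub>m m m :: complex mat)"
      hence ij: "i < m" "j < m" by auto
      show "mat_poly_eval ?rc D $$ (i, j) = 0\<^sub>m m m $$ (i, j)"
      proof (cases "i = j")
        case True
        have "poly ?rz (D $$ (i,i)) = 0" using key[OF roots[OF ij(1)]] .
        hence "poly ?rc (D $$ (i,i)) = 0" unfolding rc by simp
        thus ?thesis using DD True ij by simp
      next
        case False
        thus ?thesis using DD ij RD unfolding diagonal_mat_def by auto
      qed
    qed (insert RD, auto)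
  qed
  have "mat_poly_eval ?rc ?Tc = 0\<^sub>m m m" unfolding mpe_similar[OF wit] zrD using c by simp
  hence "mat_poly_eval (map_poly of_rat r) T = 0\<^sub>m m m" using real_ann_complex[OF T] by simp
  from minq[OF lr this] dr dr0 show False by simp
qed



lemma inv_iff_coeff0: assumes T: "(T :: real mat) \<in> carrier_mat m m"
  and minp: "is_min_poly_Q T p"
  shows "invertible_mat T \<longleftrightarrow> coeff p 0 \<noteq> 0"
proof -
  have lp: "lead_coeff p = 1" and ann: "mat_poly_eval (map_poly of_rat p) T = 0\<^sub>m m m"
    and minq: "\<And>q. lead_coeff q = 1 \<Longrightarrow> mat_poly_eval (map_poly of_rat q) T = 0\<^sub>m m m \<Longrightarrow> degree p \<le> degree q"
    using minp T unfolding is_min_poly_Q_def by auto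
  obtain c q where pq: "p = pCons c q" by (cases p)
  have c: "coeff p 0 = c" unfolding pq by simp
  let ?Q = "mat_poly_eval (map_poly of_rat q) T"
  have Q: "?Q \<in> carrier_mat m m" using mpe_carrier[OF T] .
  have TQ: "T * ?Q \<in> carrier_mat m m" using T Q by simp
  have e: "of_rat c \<cdot>\<^sub>m 1\<^sub>m m + T * ?Q = 0\<^sub>m m m"
    using ann unfolding pq of_rat_hom.map_poly_pCons_hom mpe_pCons[OF T] .
  have ent: "(T * ?Q) $$ (i,j) = (if i = j then - of_rat c else 0)" if "i < m" "j < m" for i j
  proof -
    have "(of_rat c \<cdot>\<^sub>m 1\<^sub>m m + T * ?Q) $$ (i,j) = 0" unfolding e using that by simp
    moreover have "dim_row T = m" "dim_col ?Q = m" using T Q by auto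
    ultimately show ?thesis using that by (auto split: if_splits)
  qed
  show ?thesis
  proof
    assume inv: "invertible_mat T"
    show "coeff p 0 \<noteq> 0"
    proof
      assume "coeff p 0 = 0"
      hence c0: "c = 0" using c by simp
      have d: "dim_row (T * ?Q) = m" "dim_col (T * ?Q) = m" using TQ by auto
      have TQ0: "T * ?Q = 0\<^sub>m m m" by (rule eq_matI, insert ent c0 d, auto)
      from inv obtain B where TB: "T * B = 1\<^sub>m m" and BT: "B * T = 1\<^sub>m (dim_row B)"
        unfolding invertible_mat_def inverts_mat_def using T by auto
      have B: "B \<in> carrier_mat m m" using TB BT T 
        by (metis carrier_matD(1) carrier_matD(2) carrier_matI index_mult_mat(2) index_mult_mat(3) index_one_mat(2) index_one_mat(3))
      have "?Q = (B * T) * ?Q" using BT B Q by simp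
      also have "\<dots> = B * (T * ?Q)" using B T Q by simp
      also have "\<dots> = 0\<^sub>m m m" unfolding TQ0 using B by simp
      finally have Q0: "?Q = 0\<^sub>m m m" .
      have p0: "p \<noteq> 0" using lp by auto
      hence q0: "q \<noteq> 0" using pq c0 by auto
      have "lead_coeff q = 1" using lp q0 unfolding pq by simp
      from minq[OF this Q0] have "degree p \<le> degree q" .
      moreover have "degree p = Suc (degree q)" unfolding pq using q0 by simp
      ultimately show False by simp
    qed
  next
    assume "coeff p 0 \<noteq> 0"
    hence c0: "c \<noteq> 0" using c by simp
    define B where "B = (- inverse (of_rat c)) \<cdot>\<^sub>m ?Q"
    have B: "B \<in> carrier_mat m m" unfolding B_def using Q by simp
    have TB: "T * B = 1\<^sub>m m"
    proof -
      have "T * B = (- inverse (of_rat c)) \<cdot>\<^sub>m (T * ?Q)" unfolding B_def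
        by (rule mult_smult_distrib[OF T Q])
      also have "\<dots> = 1\<^sub>m m" 
      proof -
        have d: "dim_row (T * ?Q) = m" "dim_col (T * ?Q) = m" using TQ by auto
        show ?thesis by (rule eq_matI, insert ent c0 d, auto)
      qed
      finally show ?thesis .
    qed
    have BT: "B * T = 1\<^sub>m m" by (rule mat_mult_left_right_inverse[OF T B TB])
    show "invertible_mat T" unfolding invertible_mat_def inverts_mat_def
      using T B TB BT by auto
  qed
qed



lemma gram_identity: fixes e :: "nat \<Rightarrow> nat \<Rightarrow> nat \<Rightarrow> 'a :: comm_semiring_0"
  shows "(\<Sum>j<K. (\<Sum>a<s. \<Sum>b<s. e i a b * e j a b) * w j) = (\<Sum>a<s. \<Sum>b<s. e i a b * (\<Sum>j<K. w j * e j a b))"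
proof -
  have "(\<Sum>j<K. (\<Sum>a<s. \<Sum>b<s. e i a b * e j a b) * w j) = (\<Sum>j<K. \<Sum>a<s. \<Sum>b<s. e i a b * (w j * e j a b))"
    by (simp add: sum_distrib_right sum_distrib_left mult_ac)
  also have "\<dots> = (\<Sum>a<s. \<Sum>j<K. \<Sum>b<s. e i a b * (w j * e j a b))" by (rule sum.swap)
  also have "\<dots> = (\<Sum>a<s. \<Sum>b<s. \<Sum>j<K. e i a b * (w j * e j a b))" by (rule sum.cong[OF refl], rule sum.swap)
  also have "\<dots> = (\<Sum>a<s. \<Sum>b<s. e i a b * (\<Sum>j<K. w j * e j a b))" by (simp add: sum_distrib_left)
  finally show ?thesis .
qed

lemma mpe_sum_entry: assumes T: "T \<in> carrier_mat m m" and S: "finite S" and ab: "a < m" "b < m"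
  shows "mat_poly_eval (\<Sum>j\<in>S. f j) T $$ (a,b) = (\<Sum>j\<in>S. mat_poly_eval (f j) T $$ (a,b))"
  using S
proof (induct S rule: finite_induct)
  case empty
  then show ?case using T ab by simp
next
  case (insert x F)
  have d: "dim_row (mat_poly_eval (sum f F) T) = m" "dim_col (mat_poly_eval (sum f F) T) = m"
    using mpe_carrier[OF T] by auto
  show ?case using insert(1,2,3) unfolding sum.insert[OF insert(1,2)] mpe_add[OF T] using d ab by simp
qed

lemma mpe_monom_entry: assumes T: "T \<in> carrier_mat m m" and ab: "a < m" "b < m"
  shows "mat_poly_eval (monom c j) T $$ (a,b) = c * mat_poly_eval (monom 1 j) T $$ (a,b)"
proof -
  have "monom c j = Polynomial.smult c (monom 1 j)" by (simp add: smult_monom)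
  hence "mat_poly_eval (monom c j) T = c \<cdot>\<^sub>m mat_poly_eval (monom 1 j) T" using mpe_smult[OF T] by simp
  thus ?thesis using ab mpe_carrier[OF T, of "monom 1 j"] by simp
qed

lemma complex_min: assumes C: "(C :: int mat) \<in> carrier_mat s s"
  and minp: "is_min_poly_Q (map_mat real_of_int C) p"
  shows "is_min_poly (map_mat complex_of_int C) (map_poly of_rat p)"
proof -
  let ?Cq = "map_mat (of_int :: int \<Rightarrow> rat) C"
  let ?Cr = "map_mat real_of_int C"
  let ?Cc = "map_mat complex_of_int C"
  have Cq: "?Cq \<in> carrier_mat s s" and Cr: "?Cr \<in> carrier_mat s s" and Cc: "?Cc \<in> carrier_mat s s" using C by auto
  have r: "map_mat of_rat ?Cq = ?Cr" by (rule eq_matI, insert C, auto)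
  have cc: "map_mat of_rat ?Cq = ?Cc" by (rule eq_matI, insert C, auto)
  have zr: "map_mat (of_rat :: rat \<Rightarrow> real) (0\<^sub>m s s) = 0\<^sub>m s s" by (rule eq_matI, auto)
  have zc: "map_mat (of_rat :: rat \<Rightarrow> complex) (0\<^sub>m s s) = 0\<^sub>m s s" by (rule eq_matI, auto)
  have RQ: "mat_poly_eval (map_poly of_rat q) ?Cr = 0\<^sub>m s s \<longleftrightarrow> mat_poly_eval q ?Cq = 0\<^sub>m s s" for q
  proof -
    have e: "map_mat (of_rat :: rat \<Rightarrow> real) (mat_poly_eval q ?Cq) = mat_poly_eval (map_poly of_rat q) ?Cr"
      unfolding of_rat_hom.mpe_hom[OF Cq] r ..
    show ?thesis unfolding e[symmetric] by (metis zr of_rat_hom.mat_hom_inj)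
  qed
  have CQ: "mat_poly_eval (map_poly of_rat q) ?Cc = 0\<^sub>m s s \<longleftrightarrow> mat_poly_eval q ?Cq = 0\<^sub>m s s" for q
  proof -
    have e: "map_mat (of_rat :: rat \<Rightarrow> complex) (mat_poly_eval q ?Cq) = mat_poly_eval (map_poly of_rat q) ?Cc"
      unfolding of_rat_hom.mpe_hom[OF Cq] cc ..
    show ?thesis unfolding e[symmetric] by (metis zc of_rat_hom.mat_hom_inj)
  qed
  have lp: "lead_coeff p = 1" and ann: "mat_poly_eval (map_poly of_rat p) ?Cr = 0\<^sub>m s s"
    and minq: "\<And>q. lead_coeff q = 1 \<Longrightarrow> mat_poly_eval (map_poly of_rat q) ?Cr = 0\<^sub>m s s \<Longrightarrow> degree p \<le> degree q"
    using minp Cr unfolding is_min_poly_Q_def by auto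
  have annq: "mat_poly_eval p ?Cq = 0\<^sub>m s s" using RQ ann by simp
  have dCc: "dim_row ?Cc = s" using C by simp
  show ?thesis unfolding is_min_poly_def dCc
  proof (intro conjI allI impI)
    show "lead_coeff (map_poly of_rat p :: complex poly) = 1" using lp by simp
    show "mat_poly_eval (map_poly of_rat p) ?Cc = 0\<^sub>m s s" using CQ annq by simp
    fix q :: "complex poly" assume "lead_coeff q = 1 \<and> mat_poly_eval q ?Cc = 0\<^sub>m s s"
    hence lq: "lead_coeff q = 1" and zq: "mat_poly_eval q ?Cc = 0\<^sub>m s s" by auto
    show "degree (map_poly of_rat p :: complex poly) \<le> degree q"
    proof (rule ccontr)
      assume "\<not> degree (map_poly of_rat p :: complex poly) \<le> degree q"
      hence kd: "degree q < degree p" by simp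
      define k where "k = degree q"
      define K where "K = Suc k"
      define e where "e i a b = mat_poly_eval (monom 1 i) ?Cq $$ (a,b)" for i a b
      define G where "G = mat K K (\<lambda>(i,j). \<Sum>a<s. \<Sum>b<s. e i a b * e j a b)"
      have G: "G \<in> carrier_mat K K" unfolding G_def by simp
      have detG: "det G \<noteq> 0"
      proof
        assume "det G = 0"
        from this[unfolded det_0_iff_vec_prod_zero[OF G]] obtain v where 
          v: "v \<in> carrier_vec K" "v \<noteq> 0\<^sub>v K" "G *\<^sub>v v = 0\<^sub>v K" by blast
        define r where "r = (\<Sum>j<K. monom (v$j) j)"
        have cr: "coeff r j = (if j < K then v$j else 0)" for j unfolding r_def coeff_sum by simp
        have R: "mat_poly_eval r ?Cq $$ (a,b) = (\<Sum>j<K. v$j * e j a b)" if "a < s" "b < s" for a b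
        proof -
          have "mat_poly_eval r ?Cq $$ (a,b) = (\<Sum>j<K. mat_poly_eval (monom (v$j) j) ?Cq $$ (a,b))"
            unfolding r_def by (rule mpe_sum_entry[OF Cq finite_lessThan that])
          also have "\<dots> = (\<Sum>j<K. v$j * e j a b)"
            by (rule sum.cong[OF refl], unfold e_def, rule mpe_monom_entry[OF Cq that])
          finally show ?thesis .
        qed
        have Gv: "(\<Sum>j<K. (\<Sum>a<s. \<Sum>b<s. e i a b * e j a b) * v$j) = 0" if "i < K" for i
        proof -
          have "(G *\<^sub>v v) $ i = 0" using v(3) that by simp
          moreover have "(G *\<^sub>v v) $ i = (\<Sum>j<K. G $$ (i,j) * v$j)"
            using that v(1) G by (simp add: scalar_prod_def lessThan_atLeast0)
          moreover have "\<dots> = (\<Sum>j<K. (\<Sum>a<s. \<Sum>b<s. e i a b * e j a b) * v$j)"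
            by (rule sum.cong, insert that, auto simp: G_def)
          ultimately show ?thesis by simp
        qed
        have sq: "(\<Sum>a<s. \<Sum>b<s. (\<Sum>j<K. v$j * e j a b)^2) = 0"
        proof -
          have "(\<Sum>a<s. \<Sum>b<s. (\<Sum>j<K. v$j * e j a b)^2) = 
              (\<Sum>a<s. \<Sum>b<s. \<Sum>i<K. v$i * (e i a b * (\<Sum>j<K. v$j * e j a b)))"
          proof (rule sum.cong[OF refl], rule sum.cong[OF refl])
            fix a b
            show "(\<Sum>j<K. v$j * e j a b)^2 = (\<Sum>i<K. v$i * (e i a b * (\<Sum>j<K. v$j * e j a b)))"
              unfolding power2_eq_square sum_distrib_right by (simp only: mult.assoc)
          qed
          also have "\<dots> = (\<Sum>a<s. \<Sum>i<K. \<Sum>b<s. v$i * (e i a b * (\<Sum>j<K. v$j * e j a b)))"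
            by (rule sum.cong[OF refl], rule sum.swap)
          also have "\<dots> = (\<Sum>i<K. \<Sum>a<s. \<Sum>b<s. v$i * (e i a b * (\<Sum>j<K. v$j * e j a b)))"
            by (rule sum.swap)
          also have "\<dots> = (\<Sum>i<K. v$i * (\<Sum>a<s. \<Sum>b<s. e i a b * (\<Sum>j<K. v$j * e j a b)))"
            by (simp only: sum_distrib_left)
          also have "\<dots> = (\<Sum>i<K. v$i * 0)"
            by (rule sum.cong[OF refl], subst gram_identity[symmetric], subst Gv, auto)
          finally show ?thesis by simp
        qed
        have Z: "mat_poly_eval r ?Cq = 0\<^sub>m s s"
        proof (rule eq_matI)
          fix a b assume "a < dim_row (0\<^sub>m s s :: rat mat)" "b < dim_col (0\<^sub>m s s :: rat mat)"
          hence ab: "a < s" "b < s" by auto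
          have "\<forall>a\<in>{..<s}. (\<Sum>b<s. (\<Sum>j<K. v$j * e j a b)^2) = 0"
            using sq by (subst (asm) sum_nonneg_eq_0_iff, auto intro: sum_nonneg)
          hence "\<forall>b\<in>{..<s}. (\<Sum>j<K. v$j * e j a b)^2 = 0" using ab
            by (subst (asm) sum_nonneg_eq_0_iff, auto)
          hence "(\<Sum>j<K. v$j * e j a b) = 0" using ab by simp
          thus "mat_poly_eval r ?Cq $$ (a,b) = 0\<^sub>m s s $$ (a,b)" unfolding R[OF ab] using ab by simp
        qed (insert mpe_carrier[OF Cq, of r], auto)
        have r0: "r \<noteq> 0"
        proof
          assume "r = 0"
          hence "v$j = 0" if "j < K" for j using cr[of j] that by simp
          hence "v = 0\<^sub>v K" using v(1) by (intro eq_vecI, auto)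
          with v(2) show False by simp
        qed
        have dr: "degree r \<le> k" by (rule degree_le, auto simp: cr K_def)
        define r' where "r' = Polynomial.smult (inverse (lead_coeff r)) r"
        have lr: "lead_coeff r' = 1" unfolding r'_def using r0 by simp
        have dr': "degree r' = degree r" unfolding r'_def using r0 by simp
        have "mat_poly_eval r' ?Cq = 0\<^sub>m s s" unfolding r'_def mpe_smult[OF Cq] Z by simp
        hence "mat_poly_eval (map_poly of_rat r') ?Cr = 0\<^sub>m s s" using RQ by simp
        from minq[OF lr this] dr dr' kd show False unfolding k_def by simp
      qed
      have detG': "det (map_mat (of_rat :: rat \<Rightarrow> complex) G) \<noteq> 0" using detG by (simp add: of_rat_hom.hom_det)
      define ec where "ec i a b = mat_poly_eval (monom 1 i) ?Cc $$ (a,b)" for i a b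
      have ece: "ec i a b = of_rat (e i a b)" if "a < s" "b < s" for i a b
      proof -
        have "map_mat of_rat (mat_poly_eval (monom 1 i) ?Cq) = mat_poly_eval (monom 1 i) ?Cc"
          unfolding of_rat_hom.mpe_hom[OF Cq] cc by simp
        hence "ec i a b = map_mat of_rat (mat_poly_eval (monom 1 i) ?Cq) $$ (a,b)" unfolding ec_def by simp
        thus ?thesis unfolding e_def using that mpe_carrier[OF Cq, of "monom 1 i"] by simp
      qed
      define w where "w = vec K (\<lambda>j. coeff q j)"
      have w: "w \<in> carrier_vec K" unfolding w_def by simp
      have w0: "w \<noteq> 0\<^sub>v K"
      proof
        assume "w = 0\<^sub>v K"
        hence "w $ k = 0" unfolding K_def by simp
        moreover have "w $ k = 1" unfolding w_def K_def using lq k_def by simp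
        ultimately show False by simp
      qed
      have qsum: "(\<Sum>j<K. coeff q j * ec j a b) = 0" if "a < s" "b < s" for a b
      proof -
        have "q = (\<Sum>j<K. monom (coeff q j) j)" unfolding K_def k_def lessThan_Suc_atMost
          by (rule poly_as_sum_of_monoms[symmetric])
        hence "mat_poly_eval q ?Cc $$ (a,b) = mat_poly_eval (\<Sum>j<K. monom (coeff q j) j) ?Cc $$ (a,b)" by simp
        also have "\<dots> = (\<Sum>j<K. mat_poly_eval (monom (coeff q j) j) ?Cc $$ (a,b))"
          by (rule mpe_sum_entry[OF Cc finite_lessThan that])
        also have "\<dots> = (\<Sum>j<K. coeff q j * ec j a b)"
          by (rule sum.cong[OF refl], unfold ec_def, rule mpe_monom_entry[OF Cc that])
        finally have "mat_poly_eval q ?Cc $$ (a,b) = (\<Sum>j<K. coeff q j * ec j a b)" .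
        thus ?thesis using zq that by simp
      qed
      have "map_mat of_rat G *\<^sub>v w = 0\<^sub>v K"
      proof (rule eq_vecI)
        fix i assume "i < dim_vec (0\<^sub>v K :: complex vec)"
        hence i: "i < K" by simp
        have "(map_mat of_rat G *\<^sub>v w) $ i = (\<Sum>j<K. of_rat (G $$ (i,j)) * coeff q j)"
          using i G w by (simp add: scalar_prod_def lessThan_atLeast0 w_def)
        also have "\<dots> = (\<Sum>j<K. (\<Sum>a<s. \<Sum>b<s. ec i a b * ec j a b) * coeff q j)"
          by (rule sum.cong, insert i, auto simp: G_def ece of_rat_sum of_rat_mult)
        also have "\<dots> = (\<Sum>a<s. \<Sum>b<s. ec i a b * (\<Sum>j<K. coeff q j * ec j a b))"
          by (rule gram_identity)
        also have "\<dots> = 0" by (simp add: qsum)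
        finally show "(map_mat of_rat G *\<^sub>v w) $ i = 0\<^sub>v K $ i" using i by simp
      qed (insert G, simp)
      hence "det (map_mat (of_rat :: rat \<Rightarrow> complex) G) = 0" 
        using det_0_iff_vec_prod_zero[of "map_mat (of_rat :: rat \<Rightarrow> complex) G" K] G w w0 by auto
      with detG' show False by simp
    qed
  qed
qed



lemma rat_vec_clear_denoms: assumes w: "(w :: rat vec) \<in> carrier_vec s"
  shows "\<exists>d :: int. d > 0 \<and> (\<exists>z \<in> carrier_vec s. map_vec rat_of_int z = of_int d \<cdot>\<^sub>v w)"
proof -
  define b where "b i = snd (quotient_of (w $ i))" for i
  define a where "a i = fst (quotient_of (w $ i))" for i
  define d where "d = (\<Prod>i<s. b i)"
  have bpos: "b i > 0" for i unfolding b_def by (rule quotient_of_denom_pos')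
  have wi: "w $ i = of_int (a i) / of_int (b i)" for i
    unfolding a_def b_def by (rule quotient_of_div, simp)
  have dpos: "d > 0" unfolding d_def using bpos by (simp add: prod_pos)
  have bd: "b i dvd d" if "i < s" for i unfolding d_def by (rule dvd_prodI, insert that, auto)
  define z where "z = vec s (\<lambda>i. a i * (d div b i))"
  have "map_vec rat_of_int z = of_int d \<cdot>\<^sub>v w"
  proof (rule eq_vecI)
    fix i assume "i < dim_vec (of_int d \<cdot>\<^sub>v w)"
    hence i: "i < s" using w by simp
    have h: "rat_of_int (d div b i) = of_int d / of_int (b i)" by (rule of_int_div[OF bd[OF i]])
    have "map_vec rat_of_int z $ i = of_int (a i * (d div b i))" unfolding z_def using i by simp
    also have "\<dots> = of_int (a i) * of_int (d div b i)" by (rule of_int_mult)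
    also have "\<dots> = of_int (a i) * (of_int d / of_int (b i))" by (simp only: h)
    finally have "map_vec rat_of_int z $ i = of_int (a i) * (of_int d / of_int (b i))" .
    also have "\<dots> = of_int d * w $ i" unfolding wi by simp
    finally show "map_vec rat_of_int z $ i = (of_int d \<cdot>\<^sub>v w) $ i" using i w by simp
  qed (insert w, simp add: z_def)
  moreover have "z \<in> carrier_vec s" unfolding z_def by simp
  ultimately show ?thesis using dpos by blast
qed

lemma four_block_zero_parts: assumes X: "X \<in> carrier_mat n1 n1" and Y: "Y \<in> carrier_mat n2 n2"
  and z: "four_block_mat X (0\<^sub>m n1 n2) (0\<^sub>m n2 n1) Y = 0\<^sub>m (n1 + n2) (n1 + n2)"
  shows "X = 0\<^sub>m n1 n1" "Y = 0\<^sub>m n2 n2"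
proof -
  show "X = 0\<^sub>m n1 n1"
  proof (rule eq_matI)
    fix i j assume "i < dim_row (0\<^sub>m n1 n1 :: 'a mat)" "j < dim_col (0\<^sub>m n1 n1 :: 'a mat)"
    hence ij: "i < n1" "j < n1" by auto
    have "four_block_mat X (0\<^sub>m n1 n2) (0\<^sub>m n2 n1) Y $$ (i,j) = 0" unfolding z using ij by simp
    thus "X $$ (i,j) = 0\<^sub>m n1 n1 $$ (i,j)" using ij X Y by simp
  qed (insert X, auto)
  show "Y = 0\<^sub>m n2 n2"
  proof (rule eq_matI)
    fix i j assume "i < dim_row (0\<^sub>m n2 n2 :: 'a mat)" "j < dim_col (0\<^sub>m n2 n2 :: 'a mat)"
    hence ij: "i < n2" "j < n2" by auto
    have "four_block_mat X (0\<^sub>m n1 n2) (0\<^sub>m n2 n1) Y $$ (n1+i,n1+j) = 0" unfolding z using ij by simp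
    thus "Y $$ (i,j) = 0\<^sub>m n2 n2 $$ (i,j)" using ij X Y by simp
  qed (insert Y, auto)
qed

lemma lattice_zero_lemma: assumes L: "L \<in> carrier_mat s s" and Li: "Li * L = 1\<^sub>m s" and Li': "Li \<in> carrier_mat s s"
  and R: "(R :: rat mat) \<in> carrier_mat s s"
  and inj: "\<And>x y. x \<in> lattice s L \<Longrightarrow> y \<in> lattice s L \<Longrightarrow> (\<forall>i\<in>I. x $ i = y $ i) \<Longrightarrow> x = y"
  and I: "I \<subseteq> {..<s}"
  and zero: "\<And>i j. i \<in> I \<Longrightarrow> j < s \<Longrightarrow> (L * map_mat of_rat R) $$ (i,j) = 0"
  shows "R = 0\<^sub>m s s"
proof -
  have col0: "col R j = 0\<^sub>v s" if j: "j < s" for j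
  proof -
    define w where "w = col R j"
    have w: "w \<in> carrier_vec s" unfolding w_def carrier_vec_def using R by simp
    from rat_vec_clear_denoms[OF w] obtain d z where d: "d > 0" and z: "z \<in> carrier_vec s" 
      and dz: "map_vec rat_of_int z = of_int d \<cdot>\<^sub>v w" by blast
    let ?u = "map_vec real_of_int z"
    have u: "?u \<in> carrier_vec s" using z by simp
    have uw: "?u = real_of_int d \<cdot>\<^sub>v map_vec of_rat w"
    proof (rule eq_vecI)
      fix i assume "i < dim_vec (real_of_int d \<cdot>\<^sub>v map_vec of_rat w)"
      hence i: "i < s" using w by simp
      have "map_vec rat_of_int z $ i = (of_int d \<cdot>\<^sub>v w) $ i" unfolding dz ..
      hence "of_int (z $ i) = of_int d * w $ i" using i z w by simp
      hence "(of_rat (of_int (z $ i)) :: real) = of_rat (of_int d * w $ i)" by simp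
      thus "?u $ i = (real_of_int d \<cdot>\<^sub>v map_vec of_rat w) $ i" using i z w by (simp add: of_rat_mult)
    qed (insert w z, auto)
    define x where "x = L *\<^sub>v ?u"
    have x: "x \<in> lattice s L" unfolding x_def lattice_def using z by blast
    have zl: "0\<^sub>v s \<in> lattice s L" unfolding lattice_def
    proof -
      have e: "map_vec real_of_int (0\<^sub>v s) = 0\<^sub>v s" by (intro eq_vecI, auto)
      have "L *\<^sub>v map_vec real_of_int (0\<^sub>v s) = 0\<^sub>v s" unfolding e 
        by (rule eq_vecI, insert L, auto simp: scalar_prod_right_zero)
      moreover have "(0\<^sub>v s :: int vec) \<in> carrier_vec s" by simp
      ultimately show "0\<^sub>v s \<in> {L *\<^sub>v map_vec real_of_int z |z. z \<in> carrier_vec s}" by (metis (mono_tags, lifting) mem_Collect_eq)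
    qed
    have xi: "x $ i = 0\<^sub>v s $ i" if i: "i \<in> I" for i
    proof -
      have iS: "i < s" using I i by auto
      have "x = real_of_int d \<cdot>\<^sub>v (L *\<^sub>v map_vec of_rat w)" unfolding x_def uw
        by (rule mult_mat_vec[OF L], insert w, simp)
      also have "L *\<^sub>v map_vec of_rat w = col (L * map_mat of_rat R) j"
      proof -
        have "col (L * map_mat of_rat R) j = L *\<^sub>v col (map_mat of_rat R) j"
          by (rule col_mult2, insert L R j, auto)
        also have "col (map_mat of_rat R) j = map_vec of_rat (col R j)" using R j by (simp add: col_map_mat)
        finally show ?thesis unfolding w_def by simp
      qed
      finally have "x $ i = real_of_int d * (L * map_mat of_rat R) $$ (i,j)" using iS j L R by simp
      thus ?thesis using zero[OF i j] iS by simp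
    qed
    have "x = 0\<^sub>v s" by (rule inj[OF x zl], insert xi, auto)
    hence Lu: "L *\<^sub>v ?u = 0\<^sub>v s" unfolding x_def .
    have "Li *\<^sub>v (0\<^sub>v s) = 0\<^sub>v s" by (rule eq_vecI, insert Li', auto simp: scalar_prod_right_zero)
    hence "Li *\<^sub>v (L *\<^sub>v ?u) = 0\<^sub>v s" unfolding Lu .
    hence "?u = 0\<^sub>v s" using Li Li' L u by (simp add: assoc_mult_mat_vec[symmetric, of _ s s _ s])
    hence "real_of_int d \<cdot>\<^sub>v map_vec of_rat w = 0\<^sub>v s" unfolding uw .
    hence wz: "real_of_int d * of_rat (w $ i) = 0" if "i < s" for i
    proof -
      assume "real_of_int d \<cdot>\<^sub>v map_vec of_rat w = 0\<^sub>v s"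
      hence "(real_of_int d \<cdot>\<^sub>v map_vec of_rat w) $ i = 0\<^sub>v s $ i" by simp
      thus ?thesis using that w by simp
    qed
    have "w = 0\<^sub>v s"
    proof (rule eq_vecI)
      fix i assume "i < dim_vec (0\<^sub>v s :: rat vec)"
      hence i: "i < s" by simp
      from wz[OF i] d show "w $ i = 0\<^sub>v s $ i" using i by simp
    qed (insert w, simp)
    thus ?thesis unfolding w_def .
  qed
  show ?thesis
  proof (rule eq_matI)
    fix i j assume "i < dim_row (0\<^sub>m s s :: rat mat)" "j < dim_col (0\<^sub>m s s :: rat mat)"
    hence ij: "i < s" "j < s" by auto
    have "col R j $ i = 0" unfolding col0[OF ij(2)] using ij by simp
    thus "R $$ (i,j) = 0\<^sub>m s s $$ (i,j)" using ij R by simp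
  qed (insert R, auto)
qed



lemma row_zero_mult: assumes X: "X \<in> carrier_mat s s" and L: "L \<in> carrier_mat s s"
  and i: "i < s" and j: "j < s" and z: "\<And>k. k < s \<Longrightarrow> X $$ (i,k) = 0"
  shows "(X * L) $$ (i,j) = 0"
proof -
  have "(X * L) $$ (i,j) = (\<Sum>k<s. X $$ (i,k) * L $$ (k,j))"
    using X L i j by (simp add: scalar_prod_def lessThan_atLeast0)
  also have "\<dots> = 0" using z by simp
  finally show ?thesis .
qed

theorem proposition4:
  fixes n s :: nat and L A B :: "real mat" and C :: "int mat"
  assumes "generic_cps n s L"
    and "self_similarity n s L A"
    and "B \<in> carrier_mat (s - n) (s - n)"
    and "C \<in> carrier_mat s s"
    and "four_block_mat A (0\<^sub>m n (s - n)) (0\<^sub>m (s - n) n) B * L = L * map_mat real_of_int C"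
  shows "(\<exists>p :: rat poly.
           is_min_poly_Q A p \<and> is_min_poly_Q B p \<and>
           is_min_poly_Q (map_mat real_of_int C) p \<and>
           is_min_poly (map_mat complex_of_int C) (map_poly of_rat p)) \<and>
         (invertible_mat A \<longleftrightarrow> invertible_mat B) \<and>
         (invertible_mat B \<longleftrightarrow> invertible_mat (map_mat real_of_int C)) \<and>
         (diagonalizable_C A \<longleftrightarrow> diagonalizable_C B) \<and>
         (diagonalizable_C B \<longleftrightarrow> diagonalizable_C (map_mat real_of_int C))"
proof -
  from assms(1) have n1: "1 \<le> n" "n < s" and L: "L \<in> carrier_mat s s" and Linv: "invertible_mat L"
    and injpar: "inj_on (proj_par n) (lattice s L)" and injperp: "inj_on (proj_perp n s) (lattice s L)"
    unfolding generic_cps_def by auto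
  from assms(2) have A: "A \<in> carrier_mat n n" unfolding self_similarity_def by auto
  have B: "B \<in> carrier_mat (s - n) (s - n)" and C: "C \<in> carrier_mat s s" using assms(3,4) .
  note eq = assms(5)
  have ns: "n + (s - n) = s" using n1 by simp
  let ?M = "four_block_mat A (0\<^sub>m n (s - n)) (0\<^sub>m (s - n) n) B"
  have M: "?M \<in> carrier_mat s s" using four_block_carrier_mat[OF A B] unfolding ns .
  let ?Cq = "map_mat (of_int :: int \<Rightarrow> rat) C"
  let ?Cr = "map_mat real_of_int C"
  let ?Cc = "map_mat complex_of_int C"
  have Cq: "?Cq \<in> carrier_mat s s" and Cr: "?Cr \<in> carrier_mat s s" and Cc: "?Cc \<in> carrier_mat s s" using C by auto
  have r: "map_mat of_rat ?Cq = ?Cr" by (rule eq_matI, insert C, auto)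
  have cc: "map_mat of_rat ?Cq = ?Cc" by (rule eq_matI, insert C, auto)
  have zr: "map_mat (of_rat :: rat \<Rightarrow> real) (0\<^sub>m s s) = 0\<^sub>m s s" by (rule eq_matI, auto)
  have zc: "map_mat (of_rat :: rat \<Rightarrow> complex) (0\<^sub>m s s) = 0\<^sub>m s s" by (rule eq_matI, auto)
  from Linv obtain Li where LLi: "L * Li = 1\<^sub>m s" and LiL': "Li * L = 1\<^sub>m (dim_row Li)"
    unfolding invertible_mat_def inverts_mat_def using L by auto
  have Li: "Li \<in> carrier_mat s s" using LLi LiL' L
    by (metis carrier_matD(1) carrier_matD(2) carrier_matI index_mult_mat(2) index_mult_mat(3) index_one_mat(2) index_one_mat(3))
  have LiL: "Li * L = 1\<^sub>m s" using LiL' Li by simp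
  have Rr: "map_mat of_rat (mat_poly_eval q ?Cq) = mat_poly_eval (map_poly of_rat q) ?Cr" for q
    unfolding of_rat_hom.mpe_hom[OF Cq] r ..
  have RQ: "mat_poly_eval (map_poly of_rat q) ?Cr = 0\<^sub>m s s \<longleftrightarrow> mat_poly_eval q ?Cq = 0\<^sub>m s s" for q
    unfolding Rr[symmetric] by (metis zr of_rat_hom.mat_hom_inj)
  have blocks: "mat_poly_eval (map_poly of_rat q) ?M = four_block_mat (mat_poly_eval (map_poly of_rat q) A)
      (0\<^sub>m n (s - n)) (0\<^sub>m (s - n) n) (mat_poly_eval (map_poly of_rat q) B)" for q
    by (rule mpe_four_block[OF A B])
  have inter: "mat_poly_eval (map_poly of_rat q) ?M * L = L * mat_poly_eval (map_poly of_rat q) ?Cr" for q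
    by (rule mpe_intertwine[OF M Cr L eq])
  have PA: "mat_poly_eval (map_poly of_rat q) A \<in> carrier_mat n n" for q using mpe_carrier[OF A] .
  have PB: "mat_poly_eval (map_poly of_rat q) B \<in> carrier_mat (s - n) (s - n)" for q using mpe_carrier[OF B] .
  have PM: "mat_poly_eval (map_poly of_rat q) ?M \<in> carrier_mat s s" for q using mpe_carrier[OF M] .
  have PC: "mat_poly_eval (map_poly of_rat q) ?Cr \<in> carrier_mat s s" for q using mpe_carrier[OF Cr] .
  have CAB: "mat_poly_eval (map_poly of_rat q) A = 0\<^sub>m n n \<and> mat_poly_eval (map_poly of_rat q) B = 0\<^sub>m (s - n) (s - n)"
    if z: "mat_poly_eval (map_poly of_rat q) ?Cr = 0\<^sub>m s s" for q
  proof -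
    let ?P = "mat_poly_eval (map_poly of_rat q) ?M"
    have "?P * L = 0\<^sub>m s s" unfolding inter z using L by simp
    hence "?P = 0\<^sub>m s s"
    proof -
      assume PL: "?P * L = 0\<^sub>m s s"
      have "?P = ?P * (L * Li)" unfolding LLi using right_mult_one_mat[OF PM[of q]] by simp
      also have "\<dots> = (?P * L) * Li" using assoc_mult_mat[OF PM[of q] L Li] by simp
      also have "\<dots> = 0\<^sub>m s s" unfolding PL using Li by simp
      finally show ?thesis .
    qed
    hence "four_block_mat (mat_poly_eval (map_poly of_rat q) A) (0\<^sub>m n (s - n)) (0\<^sub>m (s - n) n) (mat_poly_eval (map_poly of_rat q) B)
      = 0\<^sub>m (n + (s - n)) (n + (s - n))" unfolding blocks ns .
    from four_block_zero_parts[OF PA PB this] show ?thesis by simp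
  qed
  have AC: "mat_poly_eval (map_poly of_rat q) ?Cr = 0\<^sub>m s s" 
    if z: "mat_poly_eval (map_poly of_rat q) A = 0\<^sub>m n n" for q
  proof -
    have "mat_poly_eval q ?Cq = 0\<^sub>m s s"
    proof (rule lattice_zero_lemma[OF L LiL Li mpe_carrier[OF Cq], of "{..<n}"])
      fix x y assume x: "x \<in> lattice s L" and y: "y \<in> lattice s L" and xy: "\<forall>i\<in>{..<n}. x $ i = y $ i"
      have "proj_par n x = proj_par n y" unfolding proj_par_def using xy by auto
      with injpar x y show "x = y" by (meson inj_onD)
    next
      show "{..<n} \<subseteq> {..<s}" using n1 by auto
    next
      fix i j assume i: "i \<in> {..<n}" and j: "j < s"
      have "(L * map_mat of_rat (mat_poly_eval q ?Cq)) $$ (i,j) = (mat_poly_eval (map_poly of_rat q) ?M * L) $$ (i,j)"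
        unfolding Rr inter ..
      also have "\<dots> = 0"
      proof (rule row_zero_mult[OF PM L _ j])
        show "i < s" using i n1 by auto
        fix k assume k: "k < s"
        show "mat_poly_eval (map_poly of_rat q) ?M $$ (i,k) = 0"
          unfolding blocks z using i k n1 PB[of q] by auto
      qed
      finally show "(L * map_mat of_rat (mat_poly_eval q ?Cq)) $$ (i,j) = 0" .
    qed
    thus ?thesis using RQ by simp
  qed
  have BC: "mat_poly_eval (map_poly of_rat q) ?Cr = 0\<^sub>m s s" 
    if z: "mat_poly_eval (map_poly of_rat q) B = 0\<^sub>m (s - n) (s - n)" for q
  proof -
    have "mat_poly_eval q ?Cq = 0\<^sub>m s s"
    proof (rule lattice_zero_lemma[OF L LiL Li mpe_carrier[OF Cq], of "{n..<s}"])
      fix x y assume x: "x \<in> lattice s L" and y: "y \<in> lattice s L" and xy: "\<forall>i\<in>{n..<s}. x $ i = y $ i"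
      have "proj_perp n s x = proj_perp n s y" unfolding proj_perp_def using xy by auto
      with injperp x y show "x = y" by (meson inj_onD)
    next
      show "{n..<s} \<subseteq> {..<s}" by auto
    next
      fix i j assume i: "i \<in> {n..<s}" and j: "j < s"
      have "(L * map_mat of_rat (mat_poly_eval q ?Cq)) $$ (i,j) = (mat_poly_eval (map_poly of_rat q) ?M * L) $$ (i,j)"
        unfolding Rr inter ..
      also have "\<dots> = 0"
      proof (rule row_zero_mult[OF PM L _ j])
        show "i < s" using i by auto
        fix k assume k: "k < s"
        show "mat_poly_eval (map_poly of_rat q) ?M $$ (i,k) = 0"
          unfolding blocks z using i k n1 PA[of q] by auto
      qed
      finally show "(L * map_mat of_rat (mat_poly_eval q ?Cq)) $$ (i,j) = 0" .
    qed
    thus ?thesis using RQ by simp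
  qed
  have annA: "mat_poly_eval (map_poly of_rat q) A = 0\<^sub>m n n \<longleftrightarrow> mat_poly_eval (map_poly of_rat q) ?Cr = 0\<^sub>m s s" for q
    using AC CAB by blast
  have annB: "mat_poly_eval (map_poly of_rat q) B = 0\<^sub>m (s - n) (s - n) \<longleftrightarrow> mat_poly_eval (map_poly of_rat q) ?Cr = 0\<^sub>m s s" for q
    using BC CAB by blast
  let ?chi = "char_poly ?Cq"
  have lchi: "lead_coeff ?chi = 1" using degree_monic_char_poly[OF Cq] by simp
  have "map_mat of_rat (mat_poly_eval ?chi ?Cq) = mat_poly_eval (char_poly ?Cc) ?Cc"
    unfolding of_rat_hom.mpe_hom[OF Cq] cc of_rat_hom.char_poly_hom[OF Cq, symmetric] ..
  also have "\<dots> = 0\<^sub>m s s" by (rule complex_cayley_hamilton[OF Cc])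
  finally have "mat_poly_eval ?chi ?Cq = 0\<^sub>m s s" by (metis zc of_rat_hom.mat_hom_inj)
  hence annchi: "mat_poly_eval (map_poly of_rat ?chi) ?Cr = 0\<^sub>m s s" using RQ by simp
  define P where "P q \<longleftrightarrow> lead_coeff q = 1 \<and> mat_poly_eval (map_poly of_rat q) ?Cr = 0\<^sub>m s s" for q :: "rat poly"
  have "P ?chi" unfolding P_def using lchi annchi by simp
  from ex_has_least_nat[of P, OF this, of degree] obtain p where
    Pp: "P p" and least: "\<And>q. P q \<Longrightarrow> degree p \<le> degree q" by blast
  have dA: "dim_row A = n" and dB: "dim_row B = s - n" and dCr: "dim_row ?Cr = s" using A B C by auto
  have minCr: "is_min_poly_Q ?Cr p" unfolding is_min_poly_Q_def dCr using Pp least unfolding P_def by blast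
  have minA: "is_min_poly_Q A p" unfolding is_min_poly_Q_def dA annA using Pp least unfolding P_def by blast
  have minB: "is_min_poly_Q B p" unfolding is_min_poly_Q_def dB annB using Pp least unfolding P_def by blast
  have minCc: "is_min_poly ?Cc (map_poly of_rat p)" by (rule complex_min[OF C minCr])
  have iA: "invertible_mat A \<longleftrightarrow> coeff p 0 \<noteq> 0" by (rule inv_iff_coeff0[OF A minA])
  have iB: "invertible_mat B \<longleftrightarrow> coeff p 0 \<noteq> 0" by (rule inv_iff_coeff0[OF B minB])
  have iC: "invertible_mat ?Cr \<longleftrightarrow> coeff p 0 \<noteq> 0" by (rule inv_iff_coeff0[OF Cr minCr])
  have dg: "diagonalizable_C T \<longleftrightarrow> sep_poly p" if T: "T \<in> carrier_mat m m" and mT: "is_min_poly_Q T p" for T m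
  proof
    assume "diagonalizable_C T" thus "sep_poly p" by (rule diag_imp_sep[OF T mT])
  next
    assume sp: "sep_poly p"
    have "mat_poly_eval (map_poly of_rat p) T = 0\<^sub>m m m" using mT T unfolding is_min_poly_Q_def by auto
    from sep_imp_diag[OF T this sp] show "diagonalizable_C T" .
  qed
  show ?thesis
    using minA minB minCr minCc iA iB iC dg[OF A minA] dg[OF B minB] dg[OF Cr minCr] by blast
qed


end
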